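(* Let $\mathbb{X},\mathbb{Y}$ be finite-dimensional real polyhedral Banach spaces with $\min\{\dim\mathbb{X},\dim\mathbb{Y}\}>1$. Then no rank $1$ operator lies in the relative interior of any edge of the unit ball of $\mathbb{L}(\mathbb{X},\mathbb{Y})$.
   Context: Polyhedral: the closed unit ball has finitely many extreme points; $\mathbb{L}(\mathbb{X},\mathbb{Y})$ carries the operator norm. A convex subset $F$ of the unit sphere is a face of the unit ball if whenever $x_1,x_2$ are unit vectors and $(1-t)x_1+tx_2\in F$ for some $0<t<1$, then $x_1,x_2\in F$; its dimension is $\dim\operatorname{span}\{v-w:v,w\in F\}$. An edge is a face of dimension $1$. *)

theory Defs
  imports "HOL-Analysis.Analysis"
begin

definition polyhedral_space :: "'a::real_normed_vector itself \<Rightarrow> bool" where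
  "polyhedral_space _ \<longleftrightarrow> finite {x::'a. x extreme_point_of (cball 0 1)}"

definition unit_ball_face :: "'a::real_normed_vector set \<Rightarrow> bool" where
  "unit_ball_face F \<longleftrightarrow>
     F \<subseteq> sphere 0 1 \<and> convex F \<and>
     (\<forall>x1 x2 t. norm x1 = 1 \<and> norm x2 = 1 \<and> 0 < t \<and> t < 1 \<and>
                (1 - t) *\<^sub>R x1 + t *\<^sub>R x2 \<in> F \<longrightarrow> x1 \<in> F \<and> x2 \<in> F)"

definition face_dim :: "'a::real_normed_vector set \<Rightarrow> nat" where
  "face_dim F = dim (span {v - w | v w. v \<in> F \<and> w \<in> F})"

definition unit_ball_edge :: "'a::real_normed_vector set \<Rightarrow> bool" where
  "unit_ball_edge F \<longleftrightarrow> unit_ball_face F \<and> face_dim F = 1"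

end

theory Submission imports Defs begin

lemma indep_card_le_dim_fin:
  fixes B V B0 :: "'a::real_vector set"
  assumes fin: "finite B0" "span B0 = UNIV" and "B \<subseteq> V" "independent B"
  shows "card B \<le> dim V"
proof -
  obtain B' where B': "B \<subseteq> B'" "B' \<subseteq> V" "independent B'" "V \<subseteq> span B'"
    using maximal_independent_subset_extend[OF assms(3,4)] by blast
  have sp: "span B' = span V"
    using B' by (metis span_mono span_span subset_antisym span_minimal subspace_span)
  have "finite B'" using independent_span_bound[OF fin(1) B'(3)] fin(2) by auto
  then have "card B \<le> card B'" using B'(1) by (simp add: card_mono)
  also have "card B' = dim V" using dim_eq_card[OF sp B'(3)] by simp
  finally show ?thesis .
qed

lemma dim_psubset_fin:
  fixes S T B0 :: "'a::real_vector set"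
  assumes fin: "finite B0" "span B0 = UNIV" and sub: "span S \<subset> span T"
  shows "dim S < dim T"
proof -
  obtain BS where BS: "BS \<subseteq> S" "independent BS" "S \<subseteq> span BS"
    using maximal_independent_subset by blast
  have spBS: "span BS = span S"
    using BS by (metis span_mono span_span subset_antisym span_minimal subspace_span)
  have dS: "dim S = card BS" using dim_eq_card[OF spBS BS(2)] .
  obtain v where v: "v \<in> span T" "v \<notin> span S" using sub by blast
  have ind: "independent (insert v BS)"
    using independent_insertI[of v BS] v BS(2) spBS by auto
  have finBS: "finite BS" using independent_span_bound[OF fin(1) BS(2)] fin(2) by auto
  have vn: "v \<notin> BS" using v BS(1) span_base by blast
  have "insert v BS \<subseteq> span T"
    using v BS(1) sub span_base by blast
  then have "card (insert v BS) \<le> dim (span T)"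
    by (rule indep_card_le_dim_fin[OF fin _ ind])
  then show ?thesis using dS finBS vn by simp
qed

lemma half_half: "(1/2::real) *\<^sub>R x + (1/2) *\<^sub>R x = (x::'a::real_vector)"
  by (simp flip: scaleR_add_left)

definition lin_dirs :: "'a::real_vector set \<Rightarrow> 'a \<Rightarrow> 'a set" where
  "lin_dirs S x = {d. \<exists>e>0. x + e *\<^sub>R d \<in> S \<and> x - e *\<^sub>R d \<in> S}"

lemma seg_in:
  assumes "convex S" "x \<in> S" "x + e *\<^sub>R d \<in> S" "0 \<le> e'" "e' \<le> e"
  shows "x + e' *\<^sub>R d \<in> S"
proof (cases "e = 0")
  case True then show ?thesis using assms by simp
next
  case False
  then have ep: "e > 0" using assms by simp
  have "(1 - e'/e) *\<^sub>R x + (e'/e) *\<^sub>R (x + e *\<^sub>R d) \<in> S"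
    using convexD[OF assms(1) assms(2) assms(3), of "1 - e'/e" "e'/e"] assms ep
    by (simp add: divide_le_eq_1)
  moreover have "(1 - e'/e) *\<^sub>R x + (e'/e) *\<^sub>R (x + e *\<^sub>R d) = x + e' *\<^sub>R d"
    using ep by (simp add: algebra_simps)
  ultimately show ?thesis by simp
qed

lemma lin_dirs_subspace:
  assumes "convex S" "x \<in> S"
  shows "subspace (lin_dirs S x)"
  unfolding subspace_def
proof (intro conjI ballI allI)
  show "0 \<in> lin_dirs S x" using assms by (auto simp: lin_dirs_def intro: exI[of _ 1])
next
  fix d1 d2 assume d1: "d1 \<in> lin_dirs S x" and d2: "d2 \<in> lin_dirs S x"
  obtain e1 where e1: "e1 > 0" "x + e1 *\<^sub>R d1 \<in> S" "x - e1 *\<^sub>R d1 \<in> S"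
    using d1 by (auto simp: lin_dirs_def)
  obtain e2 where e2: "e2 > 0" "x + e2 *\<^sub>R d2 \<in> S" "x - e2 *\<^sub>R d2 \<in> S"
    using d2 by (auto simp: lin_dirs_def)
  define e where "e = min e1 e2"
  have ep: "e > 0" using e1 e2 by (simp add: e_def)
  have a1: "x + e *\<^sub>R d1 \<in> S" using seg_in[OF assms e1(2), of e] ep by (simp add: e_def)
  have a2: "x + e *\<^sub>R d2 \<in> S" using seg_in[OF assms e2(2), of e] ep by (simp add: e_def)
  have b1: "x + e *\<^sub>R (-d1) \<in> S" using seg_in[OF assms, of e1 "-d1" e] e1 ep by (simp add: e_def)
  have b2: "x + e *\<^sub>R (-d2) \<in> S" using seg_in[OF assms, of e2 "-d2" e] e2 ep by (simp add: e_def)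
  have "(1/2) *\<^sub>R (x + e *\<^sub>R d1) + (1/2) *\<^sub>R (x + e *\<^sub>R d2) \<in> S"
    using convexD[OF assms(1) a1 a2, of "1/2" "1/2"] by simp
  moreover have "(1/2) *\<^sub>R (x + e *\<^sub>R d1) + (1/2) *\<^sub>R (x + e *\<^sub>R d2) = x + (e/2) *\<^sub>R (d1 + d2)"
  proof -
    have "(1/2) *\<^sub>R (x + e *\<^sub>R d1) + (1/2) *\<^sub>R (x + e *\<^sub>R d2) = ((1/2) *\<^sub>R x + (1/2) *\<^sub>R x) + (e/2) *\<^sub>R (d1 + d2)"
      by (simp add: algebra_simps)
    then show ?thesis by (simp only: half_half)
  qed
  moreover have "(1/2) *\<^sub>R (x + e *\<^sub>R (-d1)) + (1/2) *\<^sub>R (x + e *\<^sub>R (-d2)) \<in> S"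
    using convexD[OF assms(1) b1 b2, of "1/2" "1/2"] by simp
  moreover have "(1/2) *\<^sub>R (x + e *\<^sub>R (-d1)) + (1/2) *\<^sub>R (x + e *\<^sub>R (-d2)) = x - (e/2) *\<^sub>R (d1 + d2)"
  proof -
    have "(1/2) *\<^sub>R (x + e *\<^sub>R (-d1)) + (1/2) *\<^sub>R (x + e *\<^sub>R (-d2)) = ((1/2) *\<^sub>R x + (1/2) *\<^sub>R x) - (e/2) *\<^sub>R (d1 + d2)"
      by (simp add: algebra_simps)
    then show ?thesis by (simp only: half_half)
  qed
  ultimately show "d1 + d2 \<in> lin_dirs S x" using ep unfolding lin_dirs_def
    by (intro CollectI exI[of _ "e/2"]) auto
next
  fix c :: real and d assume d: "d \<in> lin_dirs S x"
  obtain e where e: "e > 0" "x + e *\<^sub>R d \<in> S" "x - e *\<^sub>R d \<in> S"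
    using d by (auto simp: lin_dirs_def)
  show "c *\<^sub>R d \<in> lin_dirs S x"
  proof (cases "c = 0")
    case True then show ?thesis using assms by (auto simp: lin_dirs_def intro: exI[of _ 1])
  next
    case False
    then have "\<bar>c\<bar> > 0" by simp
    have "x + (e/\<bar>c\<bar>) *\<^sub>R (c *\<^sub>R d) \<in> S \<and> x - (e/\<bar>c\<bar>) *\<^sub>R (c *\<^sub>R d) \<in> S"
    proof (cases "c > 0")
      case True then show ?thesis using e by simp
    next
      case False then have "c < 0" using \<open>c \<noteq> 0\<close> by simp
      then show ?thesis using e by (simp add: algebra_simps)
    qed
    then show ?thesis unfolding lin_dirs_def using e \<open>\<bar>c\<bar> > 0\<close>
      by (intro CollectI exI[of _ "e/\<bar>c\<bar>"]) auto
  qed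
qed


lemma endpoint:
  fixes S :: "'a::real_normed_vector set"
  assumes S: "convex S" "closed S" "bounded S" and x: "x \<in> S"
    and d: "d \<in> lin_dirs S x" "d \<noteq> 0"
  shows "\<exists>t>0. x + t *\<^sub>R d \<in> S \<and> lin_dirs S (x + t *\<^sub>R d) \<subseteq> lin_dirs S x
              \<and> d \<notin> lin_dirs S (x + t *\<^sub>R d)"
proof -
  obtain e where e: "e > 0" "x + e *\<^sub>R d \<in> S" "x - e *\<^sub>R d \<in> S"
    using d by (auto simp: lin_dirs_def)
  define I where "I = {t::real. x + t *\<^sub>R d \<in> S}"
  have I_eq: "I = (\<lambda>t. x + t *\<^sub>R d) -` S" by (auto simp: I_def)
  have clI: "closed I" unfolding I_eq
    by (rule continuous_closed_vimage[OF S(2)]) (intro continuous_intros)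
  obtain B where B: "\<forall>y\<in>S. norm y \<le> B" using S(3) by (auto simp: bounded_iff)
  have nd: "norm d > 0" using d by simp
  have bd: "t \<le> 2 * B / norm d" if "t \<in> I" for t
  proof -
    have "\<bar>t\<bar> * norm d = norm ((x + t *\<^sub>R d) - x)" by simp
    also have "\<dots> \<le> norm (x + t *\<^sub>R d) + norm x" by (rule norm_triangle_ineq4)
    also have "\<dots> \<le> 2 * B"
    proof -
      have "norm (x + t *\<^sub>R d) \<le> B" using B that by (auto simp: I_def)
      moreover have "norm x \<le> B" using B x by auto
      ultimately show ?thesis by simp
    qed
    finally have "\<bar>t\<bar> * norm d \<le> 2 * B" .
    then have "t * norm d \<le> 2 * B" by (smt (verit) mult_right_mono nd)
    then show ?thesis using nd by (simp add: field_simps)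
  qed
  have bdd: "bdd_above I" using bd by (auto simp: bdd_above_def)
  have eI: "e \<in> I" using e by (simp add: I_def)
  define t1 where "t1 = Sup I"
  have t1I: "t1 \<in> I" unfolding t1_def using closed_contains_Sup[OF _ bdd clI] eI by blast
  have et1: "e \<le> t1" unfolding t1_def using cSup_upper[OF eI bdd] .
  have t1p: "t1 > 0" using et1 e by simp
  define b where "b = x + t1 *\<^sub>R d"
  have bS: "b \<in> S" using t1I by (simp add: I_def b_def)
  have dn: "d \<notin> lin_dirs S b"
  proof
    assume "d \<in> lin_dirs S b"
    then obtain e' where e': "e' > 0" "b + e' *\<^sub>R d \<in> S" by (auto simp: lin_dirs_def)
    then have "t1 + e' \<in> I" by (simp add: I_def b_def algebra_simps)
    then have "t1 + e' \<le> t1" unfolding t1_def using cSup_upper[OF _ bdd] by blast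
    then show False using e' by simp
  qed
  have sub: "lin_dirs S b \<subseteq> lin_dirs S x"
  proof
    fix c assume "c \<in> lin_dirs S b"
    then obtain e' where e': "e' > 0" "b + e' *\<^sub>R c \<in> S" "b - e' *\<^sub>R c \<in> S"
      by (auto simp: lin_dirs_def)
    define mu where "mu = e / (t1 + e)"
    define la where "la = t1 / (t1 + e)"
    have ml: "mu + la = 1" using t1p e by (simp add: mu_def la_def add_divide_distrib[symmetric])
    have ml2: "mu * t1 - la * e = 0" by (simp add: mu_def la_def mult.commute)
    have mup: "mu > 0" "la > 0" using t1p e by (auto simp: mu_def la_def)
    have id1: "mu *\<^sub>R (b + e' *\<^sub>R c) + la *\<^sub>R (x - e *\<^sub>R d) = x + (mu * e') *\<^sub>R c"
    proof -
      have "mu *\<^sub>R (b + e' *\<^sub>R c) + la *\<^sub>R (x - e *\<^sub>R d)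
            = (mu + la) *\<^sub>R x + (mu * t1 - la * e) *\<^sub>R d + (mu * e') *\<^sub>R c"
        by (simp add: b_def algebra_simps)
      then show ?thesis using ml ml2 by simp
    qed
    have id2: "mu *\<^sub>R (b - e' *\<^sub>R c) + la *\<^sub>R (x - e *\<^sub>R d) = x - (mu * e') *\<^sub>R c"
    proof -
      have "mu *\<^sub>R (b - e' *\<^sub>R c) + la *\<^sub>R (x - e *\<^sub>R d)
            = (mu + la) *\<^sub>R x + (mu * t1 - la * e) *\<^sub>R d - (mu * e') *\<^sub>R c"
        by (simp add: b_def algebra_simps)
      then show ?thesis using ml ml2 by simp
    qed
    have "x + (mu * e') *\<^sub>R c \<in> S"
      using convexD[OF S(1) e'(2) e(3), of mu la] mup ml id1 by simp
    moreover have "x - (mu * e') *\<^sub>R c \<in> S"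
      using convexD[OF S(1) e'(3) e(3), of mu la] mup ml id2 by simp
    ultimately show "c \<in> lin_dirs S x" unfolding lin_dirs_def using mup e'
      by (intro CollectI exI[of _ "mu * e'"]) auto
  qed
  show ?thesis using t1p bS sub dn by (auto simp: b_def)
qed

lemma minkowski:
  fixes S B0 :: "'a::real_normed_vector set"
  assumes fin: "finite B0" "span B0 = UNIV" and S: "convex S" "closed S" "bounded S"
    and x: "x \<in> S"
  shows "x \<in> convex hull {y. y extreme_point_of S}"
proof -
  have "\<forall>x. x \<in> S \<longrightarrow> dim (lin_dirs S x) = n \<longrightarrow> x \<in> convex hull {y. y extreme_point_of S}" for n
  proof (induction n rule: less_induct)
    case (less n)
    show ?case
    proof (intro allI impI)
      fix x assume xS: "x \<in> S" and dn: "dim (lin_dirs S x) = n"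
      have subx: "subspace (lin_dirs S x)" using lin_dirs_subspace[OF S(1) xS] .
      show "x \<in> convex hull {y. y extreme_point_of S}"
      proof (cases "lin_dirs S x \<subseteq> {0}")
        case True
        have "x extreme_point_of S"
          unfolding extreme_point_of_def
        proof (intro conjI ballI xS notI)
          fix a b assume a: "a \<in> S" and b: "b \<in> S" and xo: "x \<in> open_segment a b"
          then obtain u where u: "a \<noteq> b" "u > 0" "u < 1" "x = (1 - u) *\<^sub>R a + u *\<^sub>R b"
            by (auto simp: in_segment)
          define e where "e = min u (1 - u)"
          have ep: "e > 0" using u by (simp add: e_def)
          have xb: "x + (1 - u) *\<^sub>R (b - a) = b" using u(4) by (simp add: algebra_simps)
          have xa: "x + u *\<^sub>R (-(b - a)) = a" using u(4) by (simp add: algebra_simps)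
          have "x + e *\<^sub>R (b - a) \<in> S"
            using seg_in[OF S(1) xS, of "1 - u" "b - a" e] xb b ep by (simp add: e_def)
          moreover have "x + e *\<^sub>R (-(b - a)) \<in> S"
            using seg_in[OF S(1) xS, of u "-(b - a)" e] xa a ep by (simp add: e_def)
          moreover have "x + e *\<^sub>R (-(b - a)) = x - e *\<^sub>R (b - a)" by (simp only: scaleR_minus_right diff_conv_add_uminus)
          ultimately have "b - a \<in> lin_dirs S x" unfolding lin_dirs_def using ep
            by (intro CollectI exI[of _ e]) simp
          then show False using True u(1) by auto
        qed
        then show ?thesis by (simp add: hull_inc)
      next
        case False
        then obtain d where d: "d \<in> lin_dirs S x" "d \<noteq> 0" by auto
        obtain t1 where t1: "t1 > 0" "x + t1 *\<^sub>R d \<in> S"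
          "lin_dirs S (x + t1 *\<^sub>R d) \<subseteq> lin_dirs S x" "d \<notin> lin_dirs S (x + t1 *\<^sub>R d)"
          using endpoint[OF S xS d] by blast
        have md: "-d \<in> lin_dirs S x" "-d \<noteq> 0" using subspace_neg[OF subx d(1)] d by auto
        obtain t0 where t0: "t0 > 0" "x + t0 *\<^sub>R (-d) \<in> S"
          "lin_dirs S (x + t0 *\<^sub>R (-d)) \<subseteq> lin_dirs S x" "-d \<notin> lin_dirs S (x + t0 *\<^sub>R (-d))"
          using endpoint[OF S xS md] by blast
        have sb: "subspace (lin_dirs S (x + t1 *\<^sub>R d))" using lin_dirs_subspace[OF S(1) t1(2)] .
        have sa: "subspace (lin_dirs S (x + t0 *\<^sub>R (-d)))" using lin_dirs_subspace[OF S(1) t0(2)] .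
        have "span (lin_dirs S (x + t1 *\<^sub>R d)) \<subset> span (lin_dirs S x)"
          using t1(3,4) d(1) sb subx by (auto simp: span_eq_iff[THEN iffD2])
        then have lb: "dim (lin_dirs S (x + t1 *\<^sub>R d)) < n" using dim_psubset_fin[OF fin] dn by blast
        have "span (lin_dirs S (x + t0 *\<^sub>R (-d))) \<subset> span (lin_dirs S x)"
          using t0(3,4) md(1) sa subx by (auto simp: span_eq_iff[THEN iffD2])
        then have la: "dim (lin_dirs S (x + t0 *\<^sub>R (-d))) < n" using dim_psubset_fin[OF fin] dn by blast
        have hb: "x + t1 *\<^sub>R d \<in> convex hull {y. y extreme_point_of S}"
          using less.IH[OF lb] t1(2) by blast
        have ha: "x + t0 *\<^sub>R (-d) \<in> convex hull {y. y extreme_point_of S}"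
          using less.IH[OF la] t0(2) by blast
        have "(t0/(t0+t1)) *\<^sub>R (x + t1 *\<^sub>R d) + (t1/(t0+t1)) *\<^sub>R (x + t0 *\<^sub>R (-d))
              \<in> convex hull {y. y extreme_point_of S}"
        proof (rule convexD[OF convex_convex_hull hb ha])
          show "0 \<le> t0/(t0+t1)" "0 \<le> t1/(t0+t1)" using t0 t1 by simp_all
          show "t0/(t0+t1) + t1/(t0+t1) = 1" using t0 t1 by (simp add: add_divide_distrib[symmetric])
        qed
        moreover have "(t0/(t0+t1)) *\<^sub>R (x + t1 *\<^sub>R d) + (t1/(t0+t1)) *\<^sub>R (x + t0 *\<^sub>R (-d)) = x"
        proof -
          have "(t0/(t0+t1)) *\<^sub>R (x + t1 *\<^sub>R d) + (t1/(t0+t1)) *\<^sub>R (x + t0 *\<^sub>R (-d))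
             = (t0/(t0+t1) + t1/(t0+t1)) *\<^sub>R x + (t0/(t0+t1) * t1 - t1/(t0+t1) * t0) *\<^sub>R d"
            by (simp add: algebra_simps)
          also have "t0/(t0+t1) + t1/(t0+t1) = 1" using t0 t1 by (simp add: add_divide_distrib[symmetric])
          finally show ?thesis by simp
        qed
        ultimately show ?thesis by simp
      qed
    qed
  qed
  then show ?thesis using x by blast
qed


lemma km_ball:
  fixes B0 :: "'a::real_normed_vector set"
  assumes fin: "finite B0" "span B0 = UNIV"
  shows "cball (0::'a) 1 \<subseteq> convex hull {y. y extreme_point_of cball 0 1}"
  using minkowski[OF fin convex_cball closed_cball bounded_cball] by blast

lemma norm_from_ext:
  fixes L :: "'a::real_normed_vector \<Rightarrow> 'b::real_normed_vector" and B0 :: "'a set"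
  assumes fin: "finite B0" "span B0 = UNIV" and L: "linear L"
    and ext: "\<And>e. e extreme_point_of cball 0 1 \<Longrightarrow> norm (L e) \<le> c"
  shows "norm (L x) \<le> c * norm x"
proof -
  have cv: "convex (L -` cball 0 c)" by (rule convex_linear_vimage[OF L convex_cball])
  have "{y. y extreme_point_of cball 0 1} \<subseteq> L -` cball 0 c" using ext by auto
  then have "convex hull {y. y extreme_point_of cball 0 1} \<subseteq> L -` cball 0 c"
    using hull_minimal cv by blast
  then have sub: "cball 0 1 \<subseteq> L -` cball 0 c" using km_ball[OF fin] by blast
  show ?thesis
  proof (cases "x = 0")
    case True
    have "(0::'a) \<in> cball 0 1" by simp
    then have "L 0 \<in> cball 0 c" using sub by blast
    then have "norm (L 0) \<le> c" by simp
    then show ?thesis using True linear_0[OF L] by simp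
  next
    case False
    then have nx: "norm x > 0" by simp
    have "(1 / norm x) *\<^sub>R x \<in> cball 0 1" using nx by simp
    then have "L ((1 / norm x) *\<^sub>R x) \<in> cball 0 c" using sub by blast
    then have "norm (L ((1 / norm x) *\<^sub>R x)) \<le> c" by simp
    then have "norm (L x) / norm x \<le> c" using linear_scale[OF L] nx by simp
    then show ?thesis using nx by (simp add: field_simps)
  qed
qed

lemma lin_bounded:
  fixes L :: "'a::real_normed_vector \<Rightarrow> 'b::real_normed_vector" and B0 :: "'a set"
  assumes fin: "finite B0" "span B0 = UNIV" and pol: "polyhedral_space TYPE('a)"
    and L: "linear L"
  shows "bounded_linear L"
proof -
  define Ex where "Ex = {y::'a. y extreme_point_of cball 0 1}"
  have fE: "finite Ex" using pol by (simp add: polyhedral_space_def Ex_def)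
  define c where "c = (\<Sum>e\<in>Ex. norm (L e))"
  have "norm (L e) \<le> c" if "e extreme_point_of cball 0 1" for e
    unfolding c_def by (rule member_le_sum) (use that fE in \<open>auto simp: Ex_def\<close>)
  then have "norm (L x) \<le> c * norm x" for x using norm_from_ext[OF fin L] by blast
  then show ?thesis unfolding bounded_linear_def bounded_linear_axioms_def
    using L by (metis mult.commute)
qed

lemma small_eps:
  fixes P :: "'a \<Rightarrow> real \<Rightarrow> bool"
  assumes "finite F" "\<forall>e\<in>F. \<exists>c>0. \<forall>s. \<bar>s\<bar> \<le> c \<longrightarrow> P e s"
  shows "\<exists>\<epsilon>>0. \<forall>e\<in>F. \<forall>s. \<bar>s\<bar> \<le> \<epsilon> \<longrightarrow> P e s"
  using assms
proof (induction F rule: finite_induct)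
  case empty show ?case by (rule exI[of _ "1::real"]) simp
next
  case (insert a F)
  then obtain \<epsilon> where e: "\<epsilon> > 0" "\<forall>e\<in>F. \<forall>s. \<bar>s\<bar> \<le> \<epsilon> \<longrightarrow> P e s" by auto
  obtain c where c: "c > 0" "\<forall>s. \<bar>s\<bar> \<le> c \<longrightarrow> P a s" using insert.prems by auto
  show ?case using e c by (intro exI[of _ "min \<epsilon> c"]) auto
qed

lemma small_ok:
  fixes y z :: "'b::real_normed_vector"
  assumes "norm y < 1"
  shows "\<exists>c>0. \<forall>s. \<bar>s\<bar> \<le> c \<longrightarrow> norm (y + (s * a) *\<^sub>R z) \<le> 1"
proof -
  define c where "c = (1 - norm y) / (\<bar>a\<bar> * norm z + 1)"
  have den: "\<bar>a\<bar> * norm z + 1 > 0" by (simp add: add_nonneg_pos)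
  have cp: "c > 0" using assms den by (simp add: c_def)
  have "norm (y + (s * a) *\<^sub>R z) \<le> 1" if s: "\<bar>s\<bar> \<le> c" for s
  proof -
    have "norm (y + (s * a) *\<^sub>R z) \<le> norm y + \<bar>s\<bar> * (\<bar>a\<bar> * norm z)"
      using norm_triangle_ineq[of y "(s * a) *\<^sub>R z"] by (simp add: abs_mult mult.assoc)
    also have "\<bar>s\<bar> * (\<bar>a\<bar> * norm z) \<le> c * (\<bar>a\<bar> * norm z + 1)"
      using s cp by (intro mult_mono) auto
    also have "c * (\<bar>a\<bar> * norm z + 1) = 1 - norm y" using den by (simp add: c_def)
    finally show ?thesis by simp
  qed
  then show ?thesis using cp by blast
qed

lemma dim1_span:
  fixes V :: "'a::real_vector set"
  assumes "dim V = 1"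
  shows "\<exists>D0. D0 \<noteq> 0 \<and> D0 \<in> span V \<and> V \<subseteq> span {D0}"
proof -
  obtain B where B: "B \<subseteq> V" "independent B" "V \<subseteq> span B"
    using maximal_independent_subset by blast
  have spB: "span B = span V"
    using B by (metis span_mono span_span subset_antisym span_minimal subspace_span)
  have "card B = 1" using dim_eq_card[OF spB B(2)] assms by simp
  then have "\<exists>D0. B = {D0}" by (simp add: card_1_singleton_iff)
  then obtain D0 where D0: "B = {D0}" by blast
  have "D0 \<noteq> 0" using B(2) D0 dependent_zero by blast
  moreover have "D0 \<in> span V" using B(1) D0 span_base by blast
  ultimately show ?thesis using B(3) D0 by blast
qed


lemma face_in_span:
  fixes E :: "'c::real_normed_vector set"
  assumes E: "unit_ball_edge E" and T: "T \<in> E"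
    and S: "norm (T + S) \<le> 1" "norm (T - S) \<le> 1"
  shows "S \<in> span {v - w | v w. v \<in> E \<and> w \<in> E}"
proof -
  have F: "unit_ball_face E" using E by (simp add: unit_ball_edge_def)
  have "E \<subseteq> sphere 0 1" using F unfolding unit_ball_face_def by blast
  then have nT: "norm T = 1" using T by auto
  have "(T + S) + (T - S) = 2 *\<^sub>R T" by (simp add: scaleR_2)
  then have "2 = norm ((T + S) + (T - S))" using nT by simp
  also have "\<dots> \<le> norm (T + S) + norm (T - S)" by (rule norm_triangle_ineq)
  finally have s2: "2 \<le> norm (T + S) + norm (T - S)" .
  have n1: "norm (T + S) = 1" "norm (T - S) = 1" using s2 S by linarith+
  have mid: "(1 - 1/2) *\<^sub>R (T + S) + (1/2) *\<^sub>R (T - S) = T"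
  proof -
    have "(1 - 1/2) *\<^sub>R (T + S) + (1/2::real) *\<^sub>R (T - S) = (1/2) *\<^sub>R T + (1/2) *\<^sub>R T"
      by (simp add: algebra_simps)
    then show ?thesis by (simp only: half_half)
  qed
  have Fp: "\<forall>x1 x2 t. norm x1 = 1 \<and> norm x2 = 1 \<and> 0 < t \<and> t < 1 \<and>
                (1 - t) *\<^sub>R x1 + t *\<^sub>R x2 \<in> E \<longrightarrow> x1 \<in> E \<and> x2 \<in> E"
    using F unfolding unit_ball_face_def by blast
  have "T + S \<in> E \<and> T - S \<in> E"
    using Fp[rule_format, of "T + S" "T - S" "1/2"] n1 T mid by simp
  then have "(T + S) - (T - S) \<in> {v - w | v w. v \<in> E \<and> w \<in> E}" by blast
  then have "(1/2) *\<^sub>R ((T + S) - (T - S)) \<in> span {v - w | v w. v \<in> E \<and> w \<in> E}"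
    by (intro span_mul span_base)
  moreover have "(1/2) *\<^sub>R ((T + S) - (T - S)) = S"
  proof -
    have "(1/2) *\<^sub>R ((T + S) - (T - S)) = (1/2) *\<^sub>R S + (1/2::real) *\<^sub>R S" by (simp add: algebra_simps)
    then show ?thesis by (simp only: half_half)
  qed
  ultimately show ?thesis by simp
qed

lemma edge_contra:
  fixes E :: "'c::real_normed_vector set"
  assumes E: "unit_ball_edge E" and T: "T \<in> E"
    and S1: "norm (T + S1) \<le> 1" "norm (T - S1) \<le> 1"
    and S2: "norm (T + S2) \<le> 1" "norm (T - S2) \<le> 1"
    and ind: "S1 \<notin> span {S2}" "S2 \<noteq> 0"
  shows False
proof -
  have "dim (span {v - w | v w. v \<in> E \<and> w \<in> E}) = 1"
    using E by (simp add: unit_ball_edge_def face_dim_def)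
  then obtain D0 where D0: "span {v - w | v w. v \<in> E \<and> w \<in> E} \<subseteq> span {D0}"
    using dim1_span by blast
  have "S1 \<in> span {D0}" "S2 \<in> span {D0}"
    using face_in_span[OF E T S1] face_in_span[OF E T S2] D0 by auto
  then obtain a b where ab: "S1 = a *\<^sub>R D0" "S2 = b *\<^sub>R D0" by (auto simp: span_singleton)
  have "b \<noteq> 0" using ind(2) ab by auto
  then have "S1 = (a / b) *\<^sub>R S2" using ab by simp
  then have "S1 \<in> span {S2}" by (simp add: span_mul span_base)
  then show False using ind by simp
qed

lemma relint_dir:
  fixes E :: "'c::real_normed_vector set"
  assumes E: "unit_ball_edge E" and T: "T \<in> rel_interior E"
  shows "T \<in> E \<and> (\<exists>D. D \<noteq> 0 \<and> T + D \<in> E \<and> T - D \<in> E)"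
proof -
  obtain e where e: "T \<in> E" "e > 0" "ball T e \<inter> affine hull E \<subseteq> E"
    using T by (auto simp: mem_rel_interior_ball)
  have "dim (span {v - w | v w. v \<in> E \<and> w \<in> E}) = 1"
    using E by (simp add: unit_ball_edge_def face_dim_def)
  then obtain D0 where D0: "D0 \<noteq> 0" "D0 \<in> span (span {v - w | v w. v \<in> E \<and> w \<in> E})"
    using dim1_span by blast
  have "\<exists>P Q. P \<in> E \<and> Q \<in> E \<and> P \<noteq> Q"
  proof (rule ccontr)
    assume "\<not> ?thesis"
    then have "{v - w | v w. v \<in> E \<and> w \<in> E} \<subseteq> {0}" by auto
    then have "span {v - w | v w. v \<in> E \<and> w \<in> E} \<subseteq> span {0}" by (rule span_mono)
    then have "span {v - w | v w. v \<in> E \<and> w \<in> E} \<subseteq> {0}" by (simp add: span_insert_0)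
    then show False using D0 by (auto simp: span_span)
  qed
  then obtain P Q where PQ: "P \<in> E" "Q \<in> E" "P \<noteq> Q" by blast
  define c where "c = e / (2 * norm (P - Q))"
  have nPQ: "norm (P - Q) > 0" using PQ by simp
  have cp: "c > 0" using e nPQ by (simp add: c_def)
  define D where "D = c *\<^sub>R (P - Q)"
  have Dn: "D \<noteq> 0" using cp PQ by (simp add: D_def)
  have nD: "norm D = e / 2" using cp nPQ e(2) by (simp add: D_def c_def)
  have aff: "affine (affine hull E)" by simp
  have "T + D \<in> affine hull E"
    unfolding D_def by (rule mem_affine_3_minus[OF aff]) (use e PQ in \<open>auto intro: hull_inc\<close>)
  moreover have "T + D \<in> ball T e" using nD e by (simp add: dist_norm)
  moreover have "T + (-c) *\<^sub>R (P - Q) \<in> affine hull E"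
    by (rule mem_affine_3_minus[OF aff]) (use e PQ in \<open>auto intro: hull_inc\<close>)
  moreover have "T + (-c) *\<^sub>R (P - Q) = T - D" by (simp add: D_def)
  moreover have "T - D \<in> ball T e" using nD e by (simp add: dist_norm)
  ultimately have "T + D \<in> E" "T - D \<in> E" using e(3) by auto
  then show ?thesis using e(1) Dn by blast
qed

lemma build_S:
  fixes T :: "'a::real_normed_vector \<Rightarrow>\<^sub>L 'b::real_normed_vector" and k :: "'a \<Rightarrow> real"
    and z :: 'b and B0 :: "'a set"
  assumes fin: "finite B0" "span B0 = UNIV" and pol: "polyhedral_space TYPE('a)" and k: "linear k"
    and Q: "\<forall>e\<in>{x. x extreme_point_of cball (0::'a) 1}. \<exists>c>0. \<forall>s. \<bar>s\<bar> \<le> c \<longrightarrow> norm (T e + (s * k e) *\<^sub>R z) \<le> 1"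
  shows "\<exists>\<epsilon>>0. bounded_linear (\<lambda>x. (\<epsilon> * k x) *\<^sub>R z) \<and>
           norm (T + Blinfun (\<lambda>x. (\<epsilon> * k x) *\<^sub>R z)) \<le> 1 \<and>
           norm (T - Blinfun (\<lambda>x. (\<epsilon> * k x) *\<^sub>R z)) \<le> 1"
proof -
  have fE: "finite {x::'a. x extreme_point_of cball 0 1}"
    using pol by (simp add: polyhedral_space_def)
  obtain \<epsilon> where e: "\<epsilon> > 0"
    "\<forall>e\<in>{x. x extreme_point_of cball (0::'a) 1}. \<forall>s. \<bar>s\<bar> \<le> \<epsilon> \<longrightarrow> norm (T e + (s * k e) *\<^sub>R z) \<le> 1"
    using small_eps[OF fE Q] by blast
  have lin: "linear (\<lambda>x. (\<epsilon> * k x) *\<^sub>R z)"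
    by (simp add: linear_iff linear_add[OF k] linear_scale[OF k] algebra_simps)
  have bl: "bounded_linear (\<lambda>x. (\<epsilon> * k x) *\<^sub>R z)" by (rule lin_bounded[OF fin pol lin])
  have linT: "linear (blinfun_apply T)" by (rule bounded_linear.linear[OF blinfun.bounded_linear_right])
  have ap: "blinfun_apply (Blinfun (\<lambda>x. (\<epsilon> * k x) *\<^sub>R z)) = (\<lambda>x. (\<epsilon> * k x) *\<^sub>R z)"
    by (rule bounded_linear_Blinfun_apply[OF bl])
  have l1: "linear (\<lambda>x. blinfun_apply T x + (\<epsilon> * k x) *\<^sub>R z)"
    by (rule linear_compose_add[OF linT lin])
  have l2: "linear (\<lambda>x. blinfun_apply T x - (\<epsilon> * k x) *\<^sub>R z)"
    by (rule linear_compose_sub[OF linT lin])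
  have "norm (blinfun_apply T x + (\<epsilon> * k x) *\<^sub>R z) \<le> 1 * norm x" for x
  proof (rule norm_from_ext[OF fin l1])
    fix e :: 'a assume ee: "e extreme_point_of cball 0 1"
    have A: "\<forall>s. \<bar>s\<bar> \<le> \<epsilon> \<longrightarrow> norm (T e + (s * k e) *\<^sub>R z) \<le> 1" using e(2) ee by blast
    have h: "\<bar>\<epsilon>\<bar> \<le> \<epsilon>" using e(1) by simp
    show "norm (blinfun_apply T e + (\<epsilon> * k e) *\<^sub>R z) \<le> 1" using A[rule_format, OF h] .
  qed
  then have n1: "norm (T + Blinfun (\<lambda>x. (\<epsilon> * k x) *\<^sub>R z)) \<le> 1"
    by (intro norm_blinfun_bound) (auto simp: blinfun.add_left ap)
  have "norm (blinfun_apply T x - (\<epsilon> * k x) *\<^sub>R z) \<le> 1 * norm x" for x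
  proof (rule norm_from_ext[OF fin l2])
    fix e :: 'a assume ee: "e extreme_point_of cball 0 1"
    have A: "\<forall>s. \<bar>s\<bar> \<le> \<epsilon> \<longrightarrow> norm (T e + (s * k e) *\<^sub>R z) \<le> 1" using e(2) ee by blast
    have h: "\<bar>-\<epsilon>\<bar> \<le> \<epsilon>" using e(1) by simp
    have ineq: "norm (blinfun_apply T e + ((-\<epsilon>) * k e) *\<^sub>R z) \<le> 1" using A[rule_format, OF h] .
    have eq: "blinfun_apply T e + ((-\<epsilon>) * k e) *\<^sub>R z = blinfun_apply T e - (\<epsilon> * k e) *\<^sub>R z"
      by simp
    show "norm (blinfun_apply T e - (\<epsilon> * k e) *\<^sub>R z) \<le> 1" using ineq by (simp only: eq)
  qed
  then have n2: "norm (T - Blinfun (\<lambda>x. (\<epsilon> * k x) *\<^sub>R z)) \<le> 1"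
    by (intro norm_blinfun_bound) (auto simp: blinfun.diff_left ap)
  show ?thesis using e(1) bl n1 n2 by blast
qed

lemma two_indep:
  assumes "dim (UNIV::'a::real_vector set) > 1"
  shows "\<exists>u1 u2::'a. u1 \<notin> span {u2} \<and> u2 \<noteq> 0"
proof -
  obtain B :: "'a set" where B: "B \<subseteq> UNIV" "independent B" "UNIV \<subseteq> span B"
    using maximal_independent_subset by blast
  have spB: "span B = span (UNIV::'a set)" using B(3) by auto
  have cB: "card B > 1" using dim_eq_card[OF spB B(2)] assms by simp
  then have fB: "finite B" using card.infinite by fastforce
  obtain u1 where u1: "u1 \<in> B" using cB by fastforce
  have "card (B - {u1}) > 0" using cB u1 fB by simp
  then have "B - {u1} \<noteq> {}" by (metis card.empty less_irrefl)
  then obtain u2 where u2: "u2 \<in> B" "u2 \<noteq> u1" by blast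
  have ind: "independent {u1, u2}" by (rule independent_mono[OF B(2)]) (use u1 u2 in auto)
  then have "u1 \<notin> span {u2}" using u2 by (simp add: independent_insert)
  moreover have "u2 \<noteq> 0" using ind dependent_zero by blast
  ultimately show ?thesis by blast
qed

lemma functional_pair:
  fixes u1 u2 :: "'a::real_vector"
  assumes "u1 \<notin> span {u2}" "u2 \<noteq> 0"
  shows "\<exists>k. linear k \<and> k u1 = (1::real) \<and> k u2 = 0"
proof -
  have "u2 \<notin> span {}" using assms(2) by (simp add: span_empty)
  then have ind2: "independent {u2}" using independent_insertI[of u2 "{}"] by (simp add: independent_empty)
  have ind: "independent {u1, u2}" by (rule independent_insertI[OF assms(1) ind2])
  have ne: "u1 \<noteq> u2"
  proof
    assume "u1 = u2"
    then have "u1 \<in> span {u2}" using span_base[of u2 "{u2}"] by simp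
    then show False using assms(1) by blast
  qed
  obtain g where g: "linear g" "\<forall>x\<in>{u1, u2}. g x = (if x = u1 then (1::real) else 0)"
    using linear_independent_extend[OF ind, of "\<lambda>x. if x = u1 then (1::real) else 0"] by blast
  have "g u1 = 1" using g(2) by simp
  moreover have "g u2 = 0" using g(2) ne by simp
  ultimately show ?thesis using g(1) by blast
qed

lemma seg_norm:
  fixes y z :: "'b::real_normed_vector"
  assumes "norm (y + z) \<le> 1" "norm (y - z) \<le> 1" "\<bar>s\<bar> \<le> 1"
  shows "norm (y + s *\<^sub>R z) \<le> 1"
proof -
  have eq: "y + s *\<^sub>R z = ((1 + s) / 2) *\<^sub>R (y + z) + ((1 - s) / 2) *\<^sub>R (y - z)"
  proof -
    have "((1 + s) / 2) *\<^sub>R (y + z) + ((1 - s) / 2) *\<^sub>R (y - z)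
        = ((1 + s) / 2 + (1 - s) / 2) *\<^sub>R y + ((1 + s) / 2 - (1 - s) / 2) *\<^sub>R z"
      by (simp add: algebra_simps)
    also have "(1 + s) / 2 + (1 - s) / 2 = 1" by (simp add: field_simps)
    also have "(1 + s) / 2 - (1 - s) / 2 = s" by (simp add: field_simps)
    finally show ?thesis by simp
  qed
  have a: "0 \<le> (1 + s) / 2" "0 \<le> (1 - s) / 2" using assms(3) by auto
  have "norm (y + s *\<^sub>R z) \<le> norm (((1 + s) / 2) *\<^sub>R (y + z)) + norm (((1 - s) / 2) *\<^sub>R (y - z))"
    unfolding eq by (rule norm_triangle_ineq)
  also have "\<dots> = ((1 + s) / 2) * norm (y + z) + ((1 - s) / 2) * norm (y - z)"
    using a by simp
  also have "\<dots> \<le> ((1 + s) / 2) * 1 + ((1 - s) / 2) * 1"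
    using a assms by (intro add_mono mult_left_mono) auto
  also have "\<dots> = 1" by (simp add: field_simps)
  finally show ?thesis .
qed

theorem mainTheorem17:
  fixes T :: "'a::banach \<Rightarrow>\<^sub>L 'b::banach"
    and E :: "('a \<Rightarrow>\<^sub>L 'b) set"
  assumes "\<exists>B::'a set. finite B \<and> span B = UNIV"
    and "\<exists>B::'b set. finite B \<and> span B = UNIV"
    and "polyhedral_space TYPE('a)"
    and "polyhedral_space TYPE('b)"
    and "min (dim (UNIV::'a set)) (dim (UNIV::'b set)) > 1"
    and "unit_ball_edge E"
    and "dim (range (blinfun_apply T)) = 1"
  shows "T \<notin> rel_interior E"
proof
  assume Trel: "T \<in> rel_interior E"
  obtain BX :: "'a set" where BX: "finite BX" "span BX = UNIV" using assms(1) by blast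
  have pol: "polyhedral_space TYPE('a)" by (rule assms(3))
  obtain D where TE: "T \<in> E" and D: "D \<noteq> 0" "T + D \<in> E" "T - D \<in> E"
    using relint_dir[OF assms(6) Trel] by blast
  have sphE: "E \<subseteq> sphere 0 1"
    using assms(6) unfolding unit_ball_edge_def unit_ball_face_def by blast
  have nT: "norm T = 1" using sphE TE by auto
  have nTD: "norm (T + D) = 1" "norm (T - D) = 1" using sphE D by auto
  define Ext where "Ext = {x::'a. x extreme_point_of cball 0 1}"
  have fExt: "finite Ext" using pol by (simp add: polyhedral_space_def Ext_def)
  have extn: "norm e \<le> 1" if "e \<in> Ext" for e
    using that by (auto simp: Ext_def extreme_point_of_def)
  have Te1: "norm (T e) \<le> 1" if "e \<in> Ext" for e
  proof -
    have "norm (T e) \<le> norm T * norm e" by (rule norm_blinfun)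
    also have "\<dots> \<le> 1" using nT extn[OF that] by simp
    finally show ?thesis .
  qed
  define A where "A = {e\<in>Ext. norm (T e) = 1}"
  have notA: "norm (T e) < 1" if "e \<in> Ext" "e \<notin> A" for e
    using Te1[OF that(1)] that by (auto simp: A_def)
  have dimA: "dim (UNIV::'a set) > 1" and dimB: "dim (UNIV::'b set) > 1"
    using assms(5) by auto
  show False
  proof (cases "span A = UNIV")
    case False
    then obtain v where v: "v \<notin> span A" by auto
    obtain BA where BA: "BA \<subseteq> A" "independent BA" "A \<subseteq> span BA"
      using maximal_independent_subset by blast
    have spBA: "span BA = span A"
      using BA by (metis span_mono span_span subset_antisym span_minimal subspace_span)
    have indv: "independent (insert v BA)"
      using independent_insertI[of v BA] v BA(2) spBA by auto
    obtain h where h: "linear h" "\<forall>x\<in>insert v BA. h x = (if x = v then (1::real) else 0)"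
      using linear_independent_extend[OF indv, of "\<lambda>x. if x = v then (1::real) else 0"] by blast
    have hv: "h v = 1" using h(2) by simp
    have hBA: "h b = 0" if "b \<in> BA" for b
    proof -
      have "b \<noteq> v" using that BA(1) v span_base by blast
      then show ?thesis using h(2) that by simp
    qed
    have hA: "h e = 0" if "e \<in> A" for e
    proof -
      have "e \<in> span BA" using BA(3) that by blast
      then show ?thesis using linear_eq_0_on_span[OF h(1), of BA e] hBA by blast
    qed
    obtain z1 z2 :: 'b where z: "z1 \<notin> span {z2}" "z2 \<noteq> 0" using two_indep[OF dimB] by blast
    have Q: "\<forall>e\<in>{x. x extreme_point_of cball (0::'a) 1}. \<exists>c>0. \<forall>s. \<bar>s\<bar> \<le> c \<longrightarrow> norm (T e + (s * h e) *\<^sub>R z) \<le> 1"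
      for z :: 'b
    proof
      fix e assume eE: "e \<in> {x. x extreme_point_of cball (0::'a) 1}"
      show "\<exists>c>0. \<forall>s. \<bar>s\<bar> \<le> c \<longrightarrow> norm (T e + (s * h e) *\<^sub>R z) \<le> 1"
      proof (cases "e \<in> A")
        case True
        then have "h e = 0" "norm (T e) = 1" using hA by (auto simp: A_def)
        then show ?thesis by (intro exI[of _ "1::real"]) simp
      next
        case False
        show ?thesis by (rule small_ok[OF notA]) (use eE False in \<open>auto simp: Ext_def\<close>)
      qed
    qed
    obtain \<epsilon>1 where e1: "\<epsilon>1 > 0" "bounded_linear (\<lambda>x. (\<epsilon>1 * h x) *\<^sub>R z1)"
      "norm (T + Blinfun (\<lambda>x. (\<epsilon>1 * h x) *\<^sub>R z1)) \<le> 1"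
      "norm (T - Blinfun (\<lambda>x. (\<epsilon>1 * h x) *\<^sub>R z1)) \<le> 1"
      using build_S[OF BX pol h(1) Q[of z1]] by blast
    obtain \<epsilon>2 where e2: "\<epsilon>2 > 0" "bounded_linear (\<lambda>x. (\<epsilon>2 * h x) *\<^sub>R z2)"
      "norm (T + Blinfun (\<lambda>x. (\<epsilon>2 * h x) *\<^sub>R z2)) \<le> 1"
      "norm (T - Blinfun (\<lambda>x. (\<epsilon>2 * h x) *\<^sub>R z2)) \<le> 1"
      using build_S[OF BX pol h(1) Q[of z2]] by blast
    define S1 where "S1 = Blinfun (\<lambda>x. (\<epsilon>1 * h x) *\<^sub>R z1)"
    define S2 where "S2 = Blinfun (\<lambda>x. (\<epsilon>2 * h x) *\<^sub>R z2)"
    have ap1: "blinfun_apply S1 x = (\<epsilon>1 * h x) *\<^sub>R z1" for x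
      unfolding S1_def using bounded_linear_Blinfun_apply[OF e1(2)] by simp
    have ap2: "blinfun_apply S2 x = (\<epsilon>2 * h x) *\<^sub>R z2" for x
      unfolding S2_def using bounded_linear_Blinfun_apply[OF e2(2)] by simp
    have S2n: "S2 \<noteq> 0"
    proof
      assume "S2 = 0"
      then have "blinfun_apply S2 v = 0" by simp
      then show False using ap2[of v] hv e2(1) z(2) by simp
    qed
    have S1n: "S1 \<notin> span {S2}"
    proof
      assume "S1 \<in> span {S2}"
      then obtain c where c: "S1 = c *\<^sub>R S2" by (auto simp: span_singleton)
      then have "blinfun_apply S1 v = c *\<^sub>R blinfun_apply S2 v" by (simp add: blinfun.scaleR_left)
      then have "\<epsilon>1 *\<^sub>R z1 = (c * \<epsilon>2) *\<^sub>R z2" using ap1[of v] ap2[of v] hv by simp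
      then have "z1 = (c * \<epsilon>2 / \<epsilon>1) *\<^sub>R z2" using e1(1)
        by (metis (no_types, lifting) divide_inverse_commute less_irrefl mult.commute
            scaleR_scaleR inverse_eq_divide right_inverse scaleR_one)
      then have "z1 \<in> span {z2}" by (simp add: span_mul span_base)
      then show False using z(1) by blast
    qed
    show False
      using edge_contra[OF assms(6) TE e1(3) e1(4) e2(3) e2(4)] S1n S2n
      unfolding S1_def S2_def by blast
  next
    case True
    have "\<exists>e0\<in>A. D e0 \<noteq> 0"
    proof (rule ccontr)
      assume "\<not> ?thesis"
      then have z: "\<And>e. e \<in> A \<Longrightarrow> D e = 0" by blast
      have linD: "linear (blinfun_apply D)" by (rule bounded_linear.linear[OF blinfun.bounded_linear_right])
      have "blinfun_apply D x = blinfun_apply 0 x" for x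
        using linear_eq_0_on_span[of "blinfun_apply D" A x] linD z True by simp
      then have "D = 0" by (rule blinfun_eqI)
      then show False using D(1) by simp
    qed
    then obtain e0 where e0: "e0 \<in> A" "D e0 \<noteq> 0" by blast
    define z where "z = D e0"
    have e0E: "e0 \<in> Ext" using e0 by (simp add: A_def)
    have pz: "norm (T e0 + z) \<le> 1"
    proof -
      have "norm (blinfun_apply (T + D) e0) \<le> norm (T + D) * norm e0" by (rule norm_blinfun)
      also have "\<dots> \<le> 1" using nTD extn[OF e0E] by simp
      finally show ?thesis by (simp add: z_def blinfun.add_left)
    qed
    have mz: "norm (T e0 - z) \<le> 1"
    proof -
      have "norm (blinfun_apply (T - D) e0) \<le> norm (T - D) * norm e0" by (rule norm_blinfun)
      also have "\<dots> \<le> 1" using nTD extn[OF e0E] by simp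
      finally show ?thesis by (simp add: z_def blinfun.diff_left)
    qed
    obtain y0 where y0: "y0 \<noteq> 0" "range (blinfun_apply T) \<subseteq> span {y0}"
      using dim1_span[OF assms(7)] by blast
    have pm: "T e = T e0 \<or> T e = - T e0" if "e \<in> A" for e
    proof -
      obtain a where a: "T e = a *\<^sub>R y0" using y0(2) by (auto simp: span_singleton)
      obtain b where b: "T e0 = b *\<^sub>R y0" using y0(2) by (auto simp: span_singleton)
      have "\<bar>a\<bar> * norm y0 = 1" using a that by (simp add: A_def)
      moreover have "\<bar>b\<bar> * norm y0 = 1" using b e0(1) by (simp add: A_def)
      ultimately have "\<bar>a\<bar> = \<bar>b\<bar>" using y0(1) by (metis mult_cancel_right norm_eq_zero)
      then have "a = b \<or> a = - b" by (auto simp: abs_if split: if_splits)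
      then show ?thesis using a b by auto
    qed
    have Q: "\<forall>e\<in>{x. x extreme_point_of cball (0::'a) 1}. \<exists>c>0. \<forall>s. \<bar>s\<bar> \<le> c \<longrightarrow> norm (T e + (s * k e) *\<^sub>R z) \<le> 1"
      for k :: "'a \<Rightarrow> real"
    proof
      fix e assume eE: "e \<in> {x. x extreme_point_of cball (0::'a) 1}"
      show "\<exists>c>0. \<forall>s. \<bar>s\<bar> \<le> c \<longrightarrow> norm (T e + (s * k e) *\<^sub>R z) \<le> 1"
      proof (cases "e \<in> A")
        case True
        define c where "c = 1 / (\<bar>k e\<bar> + 1)"
        have cp: "c > 0" by (simp add: c_def add_nonneg_pos)
        have "norm (T e + (s * k e) *\<^sub>R z) \<le> 1" if s: "\<bar>s\<bar> \<le> c" for s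
        proof -
          have "\<bar>s * k e\<bar> \<le> c * \<bar>k e\<bar>" using s by (simp add: abs_mult mult_right_mono)
          also have "c * \<bar>k e\<bar> \<le> 1" by (simp add: c_def)
          finally have sk: "\<bar>s * k e\<bar> \<le> 1" .
          then have sk': "\<bar>- (s * k e)\<bar> \<le> 1" by simp
          show ?thesis
          proof (cases "T e = T e0")
            case True
            then show ?thesis using seg_norm[OF pz mz sk] by simp
          next
            case False
            then have "T e = - T e0" using pm \<open>e \<in> A\<close> by blast
            moreover have "norm (T e0 + (- (s * k e)) *\<^sub>R z) \<le> 1" using seg_norm[OF pz mz sk'] .
            moreover have "- T e0 + (s * k e) *\<^sub>R z = - (T e0 + (- (s * k e)) *\<^sub>R z)" by simp
            ultimately show ?thesis by (metis norm_minus_cancel)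
          qed
        qed
        then show ?thesis using cp by blast
      next
        case False
        show ?thesis by (rule small_ok[OF notA]) (use eE False in \<open>auto simp: Ext_def\<close>)
      qed
    qed
    obtain u1 u2 :: 'a where u: "u1 \<notin> span {u2}" "u2 \<noteq> 0" using two_indep[OF dimA] by blast
    have u': "u2 \<notin> span {u1}" "u1 \<noteq> 0"
    proof -
      have ind2: "independent {u2}" using u(2)
        using independent_insertI[of u2 "{}"] by (simp add: independent_empty span_empty)
      have ind: "independent {u1, u2}" by (rule independent_insertI[OF u(1) ind2])
      then have ind': "independent {u2, u1}" by (simp add: insert_commute)
      have "u1 \<noteq> u2" using u(1) span_base[of u2 "{u2}"] by auto
      then show "u2 \<notin> span {u1}" using ind' by (simp add: independent_insert)
      show "u1 \<noteq> 0" using ind dependent_zero by blast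
    qed
    obtain k1 :: "'a \<Rightarrow> real" where k1: "linear k1" "k1 u1 = 1" "k1 u2 = 0" using functional_pair[OF u] by blast
    obtain k2 :: "'a \<Rightarrow> real" where k2: "linear k2" "k2 u2 = 1" "k2 u1 = 0" using functional_pair[OF u'] by blast
    obtain \<epsilon>1 where e1: "\<epsilon>1 > 0" "bounded_linear (\<lambda>x. (\<epsilon>1 * k1 x) *\<^sub>R z)"
      "norm (T + Blinfun (\<lambda>x. (\<epsilon>1 * k1 x) *\<^sub>R z)) \<le> 1"
      "norm (T - Blinfun (\<lambda>x. (\<epsilon>1 * k1 x) *\<^sub>R z)) \<le> 1"
      using build_S[OF BX pol k1(1) Q[of k1]] by blast
    obtain \<epsilon>2 where e2: "\<epsilon>2 > 0" "bounded_linear (\<lambda>x. (\<epsilon>2 * k2 x) *\<^sub>R z)"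
      "norm (T + Blinfun (\<lambda>x. (\<epsilon>2 * k2 x) *\<^sub>R z)) \<le> 1"
      "norm (T - Blinfun (\<lambda>x. (\<epsilon>2 * k2 x) *\<^sub>R z)) \<le> 1"
      using build_S[OF BX pol k2(1) Q[of k2]] by blast
    define S1 where "S1 = Blinfun (\<lambda>x. (\<epsilon>1 * k1 x) *\<^sub>R z)"
    define S2 where "S2 = Blinfun (\<lambda>x. (\<epsilon>2 * k2 x) *\<^sub>R z)"
    have ap1: "blinfun_apply S1 x = (\<epsilon>1 * k1 x) *\<^sub>R z" for x
      unfolding S1_def using bounded_linear_Blinfun_apply[OF e1(2)] by simp
    have ap2: "blinfun_apply S2 x = (\<epsilon>2 * k2 x) *\<^sub>R z" for x
      unfolding S2_def using bounded_linear_Blinfun_apply[OF e2(2)] by simp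
    have zn: "z \<noteq> 0" using e0(2) by (simp add: z_def)
    have S2n: "S2 \<noteq> 0"
    proof
      assume "S2 = 0"
      then have "blinfun_apply S2 u2 = 0" by simp
      then show False using ap2[of u2] k2(2) e2(1) zn by simp
    qed
    have S1n: "S1 \<notin> span {S2}"
    proof
      assume "S1 \<in> span {S2}"
      then obtain c where c: "S1 = c *\<^sub>R S2" by (auto simp: span_singleton)
      then have "blinfun_apply S1 u1 = c *\<^sub>R blinfun_apply S2 u1" by (simp add: blinfun.scaleR_left)
      then show False using ap1[of u1] ap2[of u1] k1(2) k2(3) e1(1) zn by simp
    qed
    show False
      using edge_contra[OF assms(6) TE e1(3) e1(4) e2(3) e2(4)] S1n S2n
      unfolding S1_def S2_def by blast
  qed
qed
end
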